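(* Let $f,g\in\ell_1(\mathbb{Z})$ and $\delta,\kappa>0$. Let $I\subset\mathbb{Z}$ be an integer interval and $I=I_1\cup I_2\cup I_3$ a partition of $I$ into three subsets (not necessarily intervals) such that $|I_3|\in[\delta|I|/2,\delta|I|]$, $|I_2|\leq\delta|I|$, and $f(t_1)\geq\kappa+f(t_3)$ for all $t_1\in I_1$, $t_3\in I_3$. Let $X$ be an integer random variable uniformly distributed on an integer interval $J\subset\mathbb{Z}$ of cardinality at least $|I|$. Then $$\mathbb{P}\big\{|\{t\in I:\ |f(t)-g(t+X)|\geq\kappa/2\}|<\delta|I|/4\big\}\leq 64\delta.$$ *)

theory Defs
  imports "HOL-Analysis.Analysis" "HOL-Probability.Probability"
begin

end

theory Submission
  imports Defs
begin


lemma cover_count: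
  fixes B :: "int set" and c d :: int and n :: nat and C :: real
  assumes sub: "B \<subseteq> {c..d}" and npos: "n > 0"
    and loc: "\<And>y. real (card (B \<inter> {y..y + int n - 1})) \<le> C"
  shows "real (card B) \<le> real (nat ((d-c) div int n) + 1) * C"
proof -
  define q where "q = nat ((d-c) div int n) + 1"
  define K where "K = (\<lambda>j::nat. B \<inter> {c + int j * int n .. c + int j * int n + int n - 1})"
  have "B \<subseteq> (\<Union>j\<in>{..<q}. K j)"
  proof
    fix x assume xB: "x \<in> B"
    then have xc: "c \<le> x" "x \<le> d" using sub by auto
    define j where "j = nat ((x-c) div int n)"
    have dpos: "(x-c) div int n \<ge> 0" using xc npos by (simp add: pos_imp_zdiv_nonneg_iff)
    have "(x-c) div int n \<le> (d-c) div int n" using xc npos by (intro zdiv_mono1) auto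
    then have jq: "j < q" unfolding j_def q_def using dpos by simp
    have e: "x - c = (x-c) div int n * int n + (x-c) mod int n" by simp
    have m: "0 \<le> (x-c) mod int n" "(x-c) mod int n < int n" using npos by auto
    have ij: "int j = (x-c) div int n" using dpos j_def by simp
    have l1: "c + (x-c) div int n * int n \<le> x" using e m by linarith
    have l2: "x \<le> c + (x-c) div int n * int n + int n - 1" using e m by linarith
    have "x \<in> K j" unfolding K_def using xB l1 l2 ij by auto
    then show "x \<in> (\<Union>j\<in>{..<q}. K j)" using jq by auto
  qed
  then have "card B \<le> card (\<Union>j\<in>{..<q}. K j)"
    by (rule card_mono[rotated]) (auto simp: K_def)
  also have "\<dots> \<le> (\<Sum>j<q. card (K j))" by (rule card_UN_le) simp
  finally have "real (card B) \<le> (\<Sum>j<q. real (card (K j)))" by (metis of_nat_le_iff of_nat_sum)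
  also have "\<dots> \<le> (\<Sum>j<q. C)"
    by (rule sum_mono) (simp add: K_def loc)
  finally show ?thesis by (simp add: q_def)
qed



lemma shift_card:
  fixes Z :: "int set" and a b x :: int
  shows "card (Z \<inter> {a+x..b+x}) = card {t\<in>{a..b}. t+x\<in>Z}"
proof -
  have "Z \<inter> {a+x..b+x} = (\<lambda>t. t+x) ` {t\<in>{a..b}. t+x\<in>Z}"
  proof (intro equalityI subsetI)
    fix s assume "s \<in> Z \<inter> {a+x..b+x}"
    then show "s \<in> (\<lambda>t. t+x) ` {t\<in>{a..b}. t+x\<in>Z}"
      by (intro image_eqI[where x="s - x"]) auto
  qed auto
  moreover have "inj_on (\<lambda>t. t+x) {t\<in>{a..b}. t+x\<in>Z}" by (auto simp: inj_on_def)
  ultimately show ?thesis by (simp add: card_image)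
qed

lemma card_filter_sum:
  assumes "finite A"
  shows "card {x\<in>A. P x} = (\<Sum>x\<in>A. if P x then 1 else 0::nat)"
  using assms by (simp add: sum.If_cases Int_def conj_commute)

lemma local_bound:
  fixes Z I3 B :: "int set" and a b y :: int and n :: nat and W :: real
  assumes n: "n = card {a..b}" "n > 0"
    and I3sub: "I3 \<subseteq> {a..b}" and I3ne: "card I3 > 0"
    and W: "W \<ge> 0"
    and finB: "finite B"
    and hB1: "\<And>x. x\<in>B \<Longrightarrow> real (card {t\<in>{a..b}. t+x\<in>Z}) \<le> W"
    and hB2: "\<And>x. x\<in>B \<Longrightarrow> real (card {t\<in>I3. t+x\<in>Z}) \<ge> card I3 / 2"
  shows "real (card (B \<inter> {y..y+int n-1})) \<le> 4*W"
proof (cases "B \<inter> {y..y+int n-1} = {}")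
  case True then show ?thesis using W by simp
next
  case False
  define BK where "BK = B \<inter> {y..y+int n-1}"
  have finBK: "finite BK" using finB by (simp add: BK_def)
  have BKne: "BK \<noteq> {}" using False by (simp add: BK_def)
  define x0 where "x0 = Min BK"
  define x1 where "x1 = Max BK"
  have x0in: "x0 \<in> BK" using finBK BKne x0_def by simp
  have x1in: "x1 \<in> BK" using finBK BKne x1_def by simp
  have x0le: "\<And>x. x \<in> BK \<Longrightarrow> x0 \<le> x" using finBK x0_def by simp
  have x1ge: "\<And>x. x \<in> BK \<Longrightarrow> x \<le> x1" using finBK x1_def by simp
  have ab: "a \<le> b" using n by (cases "a \<le> b") auto
  have nab: "int n = b - a + 1" using n ab by simp
  have span: "x1 - x0 \<le> b - a" using x0in x1in nab by (auto simp: BK_def)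
  define U where "U = Z \<inter> {a+x0..b+x1}"
  have "U \<subseteq> (Z \<inter> {a+x0..b+x0}) \<union> (Z \<inter> {a+x1..b+x1})"
    using span by (auto simp: U_def)
  then have "card U \<le> card (Z \<inter> {a+x0..b+x0}) + card (Z \<inter> {a+x1..b+x1})"
    by (meson card_Un_le card_mono finite_Int finite_Un finite_atLeastAtMost_int le_trans)
  then have "real (card U) \<le> card {t\<in>{a..b}. t+x0\<in>Z} + card {t\<in>{a..b}. t+x1\<in>Z}"
    by (simp add: shift_card)
  also have "\<dots> \<le> 2*W" using hB1[of x0] hB1[of x1] x0in x1in by (simp add: BK_def)
  finally have Ub: "real (card U) \<le> 2*W" .
  have finI3: "finite I3" using I3sub finite_subset by blast
  have inj: "card {x\<in>BK. t+x\<in>Z} \<le> card U" if t: "t \<in> I3" for t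
  proof -
    have "(\<lambda>x. t+x) ` {x\<in>BK. t+x\<in>Z} \<subseteq> U"
      using t I3sub x0le x1ge by (force simp: U_def)
    moreover have "inj_on (\<lambda>x. t+x) {x\<in>BK. t+x\<in>Z}" by (auto simp: inj_on_def)
    ultimately show ?thesis
      by (metis card_inj_on_le U_def finite_Int finite_atLeastAtMost_int)
  qed
  have "(\<Sum>x\<in>BK. card {t\<in>I3. t+x\<in>Z}) = (\<Sum>x\<in>BK. \<Sum>t\<in>I3. if t+x\<in>Z then 1 else 0::nat)"
    using finI3 by (simp add: card_filter_sum)
  also have "\<dots> = (\<Sum>t\<in>I3. \<Sum>x\<in>BK. if t+x\<in>Z then 1 else 0::nat)"
    by (rule sum.swap)
  also have "\<dots> = (\<Sum>t\<in>I3. card {x\<in>BK. t+x\<in>Z})"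
    using finBK by (simp add: card_filter_sum)
  also have "\<dots> \<le> (\<Sum>t\<in>I3. card U)"
    by (rule sum_mono) (rule inj)
  also have "\<dots> = card I3 * card U" by simp
  finally have S0: "(\<Sum>x\<in>BK. card {t\<in>I3. t+x\<in>Z}) \<le> card I3 * card U" .
  have S1: "(\<Sum>x\<in>BK. real (card {t\<in>I3. t+x\<in>Z})) \<le> real (card I3) * real (card U)"
    using S0 by (simp only: of_nat_sum[symmetric] of_nat_mult[symmetric] of_nat_le_iff)
  have "(\<Sum>x\<in>BK. real (card I3) / 2) \<le> (\<Sum>x\<in>BK. real (card {t\<in>I3. t+x\<in>Z}))"
    by (rule sum_mono) (use hB2 in \<open>auto simp: BK_def\<close>)
  moreover have "(\<Sum>x\<in>BK. real (card I3) / 2) = real (card BK) * (real (card I3) / 2)" by simp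
  moreover have "real (card I3) * real (card U) \<le> real (card I3) * (2*W)"
    using Ub by (intro mult_left_mono) auto
  ultimately have "real (card BK) * (real (card I3) / 2) \<le> real (card I3) * (2*W)"
    using S1 by linarith
  then have "real (card I3) * (real (card BK) / 2) \<le> real (card I3) * (2*W)"
    by (simp add: algebra_simps)
  then have "real (card BK) / 2 \<le> 2 * W" using I3ne
    by (simp add: mult_le_cancel_left_pos)
  then show ?thesis by (simp add: BK_def)
qed


theorem lemma4p8:
  fixes f g :: "int \<Rightarrow> real" and \<delta> \<kappa> :: real
    and a b c d :: int and I1 I2 I3 :: "int set"
  assumes f_l1: "(\<lambda>t. \<bar>f t\<bar>) summable_on UNIV"
    and g_l1: "(\<lambda>t. \<bar>g t\<bar>) summable_on UNIV"
    and \<delta>_pos: "\<delta> > 0" and \<kappa>_pos: "\<kappa> > 0"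
    and part: "I1 \<union> I2 \<union> I3 = {a..b}"
    and disj12: "I1 \<inter> I2 = {}" and disj13: "I1 \<inter> I3 = {}" and disj23: "I2 \<inter> I3 = {}"
    and I3_lower: "\<delta> * real (card {a..b}) / 2 \<le> real (card I3)"
    and I3_upper: "real (card I3) \<le> \<delta> * real (card {a..b})"
    and I2_card: "real (card I2) \<le> \<delta> * real (card {a..b})"
    and gap: "\<And>t1 t3. t1 \<in> I1 \<Longrightarrow> t3 \<in> I3 \<Longrightarrow> f t1 \<ge> \<kappa> + f t3"
    and J_ne: "{c..d} \<noteq> {}"
    and J_card: "card {c..d} \<ge> card {a..b}"
  shows "measure_pmf.prob (pmf_of_set {c..d})
           {x. real (card {t \<in> {a..b}. \<bar>f t - g (t + x)\<bar> \<ge> \<kappa> / 2})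
                 < \<delta> * real (card {a..b}) / 4}
         \<le> 64 * \<delta>"
proof -
  define n where "n = card {a..b}"
  define F where "F = (\<lambda>x. {t \<in> {a..b}. \<bar>f t - g (t + x)\<bar> \<ge> \<kappa> / 2})"
  define S where "S = {x. real (card (F x)) < \<delta> * real n / 4}"
  define B where "B = {c..d} \<inter> S"
  have finJ: "finite {c..d}" by simp
  have prob: "measure_pmf.prob (pmf_of_set {c..d}) S = real (card B) / real (card {c..d})"
    using measure_pmf_of_set[OF J_ne finJ] by (simp add: B_def)
  have Mpos: "card {c..d} > 0" using J_ne finJ by (simp add: card_gt_0_iff)
  have goal_eq: "?thesis \<longleftrightarrow> real (card B) / real (card {c..d}) \<le> 64 * \<delta>"
    using prob by (simp add: S_def F_def n_def)
  show ?thesis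
  proof (cases "n = 0")
    case True
    then have "{a..b} = {}" unfolding n_def by simp
    then have "B = {}" by (auto simp: B_def S_def F_def True)
    then show ?thesis using goal_eq \<delta>_pos by simp
  next
    case False
    then have npos: "n > 0" by simp
    have I3sub: "I3 \<subseteq> {a..b}" and I2sub: "I2 \<subseteq> {a..b}" and I1sub: "I1 \<subseteq> {a..b}"
      using part by auto
    have finI3: "finite I3" and finI2: "finite I2" and finI1: "finite I1"
      using I3sub I2sub I1sub by (auto intro: finite_subset)
    have I3pos: "card I3 > 0"
    proof -
      have "\<delta> * real n / 2 > 0" using \<delta>_pos npos by simp
      moreover have "\<delta> * real n / 2 \<le> real (card I3)" using I3_lower by (simp only: n_def)
      ultimately have "real (card I3) > 0" by linarith
      then show ?thesis by simp
    qed
    then have I3ne: "I3 \<noteq> {}" by auto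
    define \<alpha> where "\<alpha> = Max (f ` I3)"
    have hf3: "f t \<le> \<alpha>" if "t \<in> I3" for t
      using that finI3 by (simp add: \<alpha>_def)
    have "\<alpha> \<in> f ` I3" unfolding \<alpha>_def using finI3 I3ne by (intro Max_in) auto
    then obtain t3 where t3: "t3 \<in> I3" "f t3 = \<alpha>" by auto
    have hf1: "\<kappa> + \<alpha> \<le> f t" if "t \<in> I1" for t
      using gap[OF that t3(1)] t3(2) by simp
    define Z where "Z = {s. g s < \<alpha> + \<kappa> / 2}"
    define W where "W = 9/4 * \<delta> * real n"
    have Wnn: "W \<ge> 0" using \<delta>_pos by (simp add: W_def)
    have hB: "real (card {t\<in>{a..b}. t+x\<in>Z}) \<le> W \<and> real (card {t\<in>I3. t+x\<in>Z}) \<ge> card I3 / 2"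
      if xB: "x \<in> B" for x
    proof -
      define A1 where "A1 = {t\<in>I1. t+x\<in>Z}"
      define A3 where "A3 = {t\<in>I3. t+x\<notin>Z}"
      have A1F: "A1 \<subseteq> F x"
      proof
        fix t assume t: "t \<in> A1"
        then have "t \<in> I1" "g (t+x) < \<alpha> + \<kappa>/2" by (auto simp: A1_def Z_def)
        then have t1: "t \<in> I1" and g1: "g (t+x) < \<alpha> + \<kappa>/2" by auto
        have "\<kappa> + \<alpha> \<le> f t" using hf1 t1 by blast
        then have "\<kappa>/2 \<le> f t - g (t+x)" using g1 by linarith
        then have "\<kappa>/2 \<le> \<bar>f t - g (t+x)\<bar>" by (rule order_trans[OF _ abs_ge_self])
        then show "t \<in> F x" using t I1sub by (auto simp: F_def A1_def)
      qed
      have A3F: "A3 \<subseteq> F x"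
      proof
        fix t assume t: "t \<in> A3"
        then have "t \<in> I3" "g (t+x) \<ge> \<alpha> + \<kappa>/2" by (auto simp: A3_def Z_def)
        then have t1: "t \<in> I3" and g1: "g (t+x) \<ge> \<alpha> + \<kappa>/2" by auto
        have "f t \<le> \<alpha>" using hf3 t1 by blast
        then have "\<kappa>/2 \<le> -(f t - g (t+x))" using g1 by linarith
        then have "\<kappa>/2 \<le> \<bar>f t - g (t+x)\<bar>" by (rule order_trans[OF _ abs_ge_minus_self])
        then show "t \<in> F x" using t I3sub by (auto simp: F_def A3_def)
      qed
      have dA: "A1 \<inter> A3 = {}" using disj13 by (auto simp: A1_def A3_def)
      have finF: "finite (F x)" unfolding F_def by (rule finite_subset[of _ "{a..b}"]) auto
      have finA1: "finite A1" using finI1 by (simp add: A1_def)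
      have finA3: "finite A3" using finI3 by (simp add: A3_def)
      have "card A1 + card A3 = card (A1 \<union> A3)" using dA finA1 finA3 by (simp add: card_Un_disjoint)
      also have "\<dots> \<le> card (F x)" using A1F A3F finF by (intro card_mono) auto
      finally have c13: "real (card A1) + real (card A3) \<le> real (card (F x))" by linarith
      have Fx: "real (card (F x)) < \<delta> * real n / 4" using xB by (simp add: B_def S_def)
      have "{t\<in>{a..b}. t+x\<in>Z} \<subseteq> A1 \<union> I2 \<union> I3" using part by (auto simp: A1_def)
      then have "card {t\<in>{a..b}. t+x\<in>Z} \<le> card (A1 \<union> I2 \<union> I3)"
        using finA1 finI2 finI3 by (intro card_mono) auto
      also have "\<dots> \<le> card (A1 \<union> I2) + card I3" by (rule card_Un_le)
      also have "\<dots> \<le> card A1 + card I2 + card I3" using card_Un_le[of A1 I2] by simp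
      finally have h1: "real (card {t\<in>{a..b}. t+x\<in>Z}) \<le> real (card A1) + real (card I2) + real (card I3)"
        by linarith
      have "{t\<in>I3. t+x\<in>Z} \<union> A3 = I3" "{t\<in>I3. t+x\<in>Z} \<inter> A3 = {}" by (auto simp: A3_def)
      then have "card {t\<in>I3. t+x\<in>Z} + card A3 = card I3"
        using finI3 finA3 by (metis card_Un_disjoint finite_Un)
      then have h2: "real (card {t\<in>I3. t+x\<in>Z}) + real (card A3) = real (card I3)" by linarith
      have L3: "\<delta> * real n / 2 \<le> real (card I3)" using I3_lower by (simp only: n_def)
      have U3: "real (card I3) \<le> \<delta> * real n" using I3_upper by (simp only: n_def)
      have U2: "real (card I2) \<le> \<delta> * real n" using I2_card by (simp only: n_def)
      show ?thesis
        using h1 h2 c13 Fx L3 U3 U2 unfolding W_def by (intro conjI; linarith)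
    qed
    have finB: "finite B" by (simp add: B_def)
    have loc: "real (card (B \<inter> {y..y + int n - 1})) \<le> 4 * W" for y
    proof (rule local_bound[where Z=Z, OF n_def npos I3sub I3pos Wnn finB])
      fix x assume "x \<in> B"
      then show "real (card {t\<in>{a..b}. t+x\<in>Z}) \<le> W" using hB by blast
    next
      fix x assume "x \<in> B"
      then show "real (card {t\<in>I3. t+x\<in>Z}) \<ge> real (card I3) / 2" using hB by blast
    qed
    have BJ: "B \<subseteq> {c..d}" by (simp add: B_def)
    have cB: "real (card B) \<le> real (nat ((d-c) div int n) + 1) * (4 * W)"
      by (rule cover_count[OF BJ npos loc])
    define q where "q = nat ((d-c) div int n) + 1"
    have cd: "c \<le> d" using J_ne by simp
    have Mdef: "int (card {c..d}) = d - c + 1" using cd by simp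
    have nM: "int n \<le> d - c + 1" using J_card Mdef n_def by linarith
    have dn0: "d - c = (d-c) div int n * int n + (d-c) mod int n" by simp
    have dn1: "(d-c) mod int n \<ge> 0" using npos by simp
    have dn: "(d-c) div int n * int n \<le> d - c" using dn0 dn1 by linarith
    have dnn: "(d-c) div int n \<ge> 0" using cd npos by (simp add: pos_imp_zdiv_nonneg_iff)
    have "int q * int n = (d-c) div int n * int n + int n" using dnn by (simp add: q_def algebra_simps)
    also have "\<dots> \<le> 2 * int (card {c..d})" using dn nM Mdef by linarith
    finally have "int (q * n) \<le> int (2 * card {c..d})" by simp
    then have qn: "real q * real n \<le> 2 * real (card {c..d})"
      by (metis of_nat_le_iff of_nat_mult of_nat_numeral zle_int)
    have "real (card B) \<le> real q * (4 * W)" using cB by (simp add: q_def)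
    also have "\<dots> = 9 * \<delta> * (real q * real n)" by (simp add: W_def algebra_simps)
    also have "\<dots> \<le> 9 * \<delta> * (2 * real (card {c..d}))"
      using qn \<delta>_pos by (intro mult_left_mono) auto
    finally have "real (card B) \<le> 18 * \<delta> * real (card {c..d})" by simp
    then have "real (card B) / real (card {c..d}) \<le> 18 * \<delta>"
      using Mpos by (simp add: divide_simps)
    then show ?thesis using goal_eq \<delta>_pos by simp
  qed
qed

end
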